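(* Let $\mathcal{T}$ be an MPQ-tree of an interval graph $G=(V,E)$, let $(x,y)\in E$ with $x$ over $y$ and $node(x)\neq node(y)$, and suppose the $\langle x,y\rangle$-tree-path starts in a central section $S_a$ of the Q-node $node(x)$. If there is a vertex $q\in S_a\setminus(S_{l(x)}\cup S_{r(x)})$, then $(x,y)$ is not an interval edge.
   Context: Graphs are finite and simple; for $G=(V,E)$ and $e\in E$, $G-e=(V,E\setminus\{e\})$. An edge $(x,y)\in E$ of an interval graph $G$ is an interval edge if $G-(x,y)$ is an interval graph. An MPQ-tree of an interval graph $G=(V,E)$, $V=\{1,\dots,n\}$, is a rooted plane tree whose nodes are P-nodes and Q-nodes. Each P-node carries a (possibly empty) set of vertices. A Q-node has $k\ge 3$ ordered positions $1,\dots,k$; position $i$ carries a set $S_i\subseteq V$ (the $i$-th section) and a child subtree $T_i$, which may be empty. Every vertex $v$ is assigned to exactly one node $node(v)$: either $v$ lies in the set of the P-node $node(v)$, or $node(v)$ is a Q-node and $v$ lies exactly in the sections $S_{l(v)},\dots,S_{r(v)}$ of it, with $l(v)<r(v)$. For a node with child subtrees $T_1,\dots,T_k$, $V_i$ denotes the set of vertices assigned to nodes of $T_i$ ($V_i=\emptyset$ if $T_i$ is empty). The maximal cliques of $G$ are in bijection with the descending paths from the root which at a P-node continue into one of its children (stopping if there is none) and at a Q-node choose a position $i$ and continue into $T_i$ (stopping if $T_i$ is empty); the clique is the union of the sets of the visited P-nodes and the chosen sections. Reading these cliques left to right gives a linear order of the maximal cliques, and the orders obtained this way after arbitrarily permuting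 children of P-nodes and reversing the positions of Q-nodes are exactly the orders of the maximal cliques of $G$ in which the cliques containing any fixed vertex are consecutive. Moreover, for every Q-node with sections $S_1,\dots,S_k$: (a) $V_1\neq\emptyset$ and $V_k\ne\emptyset$; (b) $S_1\subseteq S_2$ and $S_k\subseteq S_{k-1}$; (c) $S_{i-1}\cap S_i\neq\emptyset$ for $2\le i\le k$; (d) $S_{i-1}\neq S_i$ for $2\le i\le k$; (e) $(S_i\cap S_{i+1})\setminus S_1\neq\emptyset$ and $(S_{i-1}\cap S_i)\setminus S_k\neq\emptyset$ for $2\le i\le k-1$; (f) $(S_{i-1}\cup V_{i-1})\setminus S_i\neq\emptyset$ and $(S_i\cup V_i)\setminus S_{i-1}\neq\emptyset$ for $2\le i\le k$; and further (g) no empty P-node has an empty P-node as its parent, (h) no P-node has exactly one child whose root is a P-node, (i) every child subtree of a P-node is nonempty. We say $x$ is over $y$ if $node(x)$ is the lowest common ancestor of $node(x)$ and $node(y)$ in $\mathcal{T}$. For $x$ over $y$ with $node(x)\ne node(y)$, the $\langle x,y\rangle$-tree-path is the tree path $node(x)=n_1,n_2,\dots,n_t=node(y)$. It starts in a central section $S_a$ if $n_1$ is a Q-node and $n_2$ lies in the subtree $T_a$ of $n_1$ with $l(x)<a<r(x)$. *)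

theory Defs
  imports Complex_Main "HOL-Library.Multiset"
begin

definition graph :: "'a set \<Rightarrow> 'a set set \<Rightarrow> bool" where
  "graph V E \<longleftrightarrow> finite V \<and> E \<subseteq> {{u, v} | u v. u \<in> V \<and> v \<in> V \<and> u \<noteq> v}"

definition interval_graph :: "'a set \<Rightarrow> 'a set set \<Rightarrow> bool" where
  "interval_graph V E \<longleftrightarrow> graph V E \<and>
     (\<exists>lo hi :: 'a \<Rightarrow> real. (\<forall>v\<in>V. lo v \<le> hi v) \<and>
        (\<forall>u\<in>V. \<forall>v\<in>V. u \<noteq> v \<longrightarrow> ({u, v} \<in> E \<longleftrightarrow> lo u \<le> hi v \<and> lo v \<le> hi u)))"

definition interval_edge :: "'a set \<Rightarrow> 'a set set \<Rightarrow> 'a \<Rightarrow> 'a \<Rightarrow> bool" where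
  "interval_edge V E x y \<longleftrightarrow> {x, y} \<in> E \<and> interval_graph V (E - {{x, y}})"

definition is_clique :: "'a set \<Rightarrow> 'a set set \<Rightarrow> 'a set \<Rightarrow> bool" where
  "is_clique V E C \<longleftrightarrow> C \<subseteq> V \<and> (\<forall>u\<in>C. \<forall>v\<in>C. u \<noteq> v \<longrightarrow> {u, v} \<in> E)"

definition max_cliques :: "'a set \<Rightarrow> 'a set set \<Rightarrow> 'a set set" where
  "max_cliques V E = {C. is_clique V E C \<and> (\<forall>D. is_clique V E D \<and> C \<subseteq> D \<longrightarrow> D = C)}"

definition consecutive_clique_order :: "'a set \<Rightarrow> 'a set set \<Rightarrow> 'a set list \<Rightarrow> bool" where
  "consecutive_clique_order V E L \<longleftrightarrow> distinct L \<and> set L = max_cliques V E \<and>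
     (\<forall>v i j k. i \<le> j \<and> j \<le> k \<and> k < length L \<and> v \<in> L ! i \<and> v \<in> L ! k \<longrightarrow> v \<in> L ! j)"

text \<open>Empty is the empty child subtree (allowed only below Q-nodes).
  Q ss: Q-node with positions 0..k-1 (0-based!), position i carrying section fst (ss!i)
  and child subtree snd (ss!i).\<close>
datatype 'a mpq = Empty | PN "'a set" "'a mpq list" | QN "('a set \<times> 'a mpq) list"

fun subtree_at :: "'a mpq \<Rightarrow> nat list \<Rightarrow> 'a mpq option" where
  "subtree_at t [] = Some t"
| "subtree_at Empty (i # p) = None"
| "subtree_at (PN S cs) (i # p) = (if i < length cs then subtree_at (cs ! i) p else None)"
| "subtree_at (QN ss) (i # p) = (if i < length ss then subtree_at (snd (ss ! i)) p else None)"

fun node_verts :: "'a mpq \<Rightarrow> 'a set" where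
  "node_verts Empty = {}"
| "node_verts (PN S cs) = S"
| "node_verts (QN ss) = (\<Union>i<length ss. fst (ss ! i))"

fun tree_verts :: "'a mpq \<Rightarrow> 'a set" where
  "tree_verts Empty = {}"
| "tree_verts (PN S cs) = S \<union> \<Union> (set (map tree_verts cs))"
| "tree_verts (QN ss) = \<Union> (set (map (\<lambda>(S, t). S \<union> tree_verts t) ss))"

definition assigned :: "'a mpq \<Rightarrow> 'a \<Rightarrow> nat list \<Rightarrow> bool" where
  "assigned T v p \<longleftrightarrow> (\<exists>t. subtree_at T p = Some t \<and> t \<noteq> Empty \<and> v \<in> node_verts t)"

definition node_of :: "'a mpq \<Rightarrow> 'a \<Rightarrow> nat list" where
  "node_of T v = (THE p. assigned T v p)"

fun cliques :: "'a mpq \<Rightarrow> 'a set list" where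
  "cliques Empty = [{}]"
| "cliques (PN S cs) = (if cs = [] then [S] else concat (map (\<lambda>c. map ((\<union>) S) (cliques c)) cs))"
| "cliques (QN ss) = concat (map (\<lambda>(S, t). map ((\<union>) S) (cliques t)) ss)"

inductive equiv_tree :: "'a mpq \<Rightarrow> 'a mpq \<Rightarrow> bool" where
  "equiv_tree Empty Empty"
| "list_all2 equiv_tree cs ds \<Longrightarrow> mset ds' = mset ds \<Longrightarrow> equiv_tree (PN S cs) (PN S ds')"
| "list_all2 (\<lambda>a b. fst a = fst b \<and> equiv_tree (snd a) (snd b)) ss ss'
     \<Longrightarrow> equiv_tree (QN ss) (QN ss')"
| "list_all2 (\<lambda>a b. fst a = fst b \<and> equiv_tree (snd a) (snd b)) ss ss'
     \<Longrightarrow> equiv_tree (QN ss) (QN (rev ss'))"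

definition sec_idx :: "('a set \<times> 'a mpq) list \<Rightarrow> 'a \<Rightarrow> nat set" where
  "sec_idx ss v = {i. i < length ss \<and> v \<in> fst (ss ! i)}"

text \<open>l(v) and r(v) (0-based) for a vertex v of the Q-node with positions ss.\<close>
definition lsec :: "('a set \<times> 'a mpq) list \<Rightarrow> 'a \<Rightarrow> nat" where
  "lsec ss v = Min (sec_idx ss v)"
definition rsec :: "('a set \<times> 'a mpq) list \<Rightarrow> 'a \<Rightarrow> nat" where
  "rsec ss v = Max (sec_idx ss v)"

text \<open>Local conditions at a single node (Q-node conditions (a)-(f), vertex spans,
  and P-node conditions (g)-(i)). Indices are 0-based: paper's position i is i-1 here.\<close>
definition node_ok :: "'a mpq \<Rightarrow> bool" where
  "node_ok t \<longleftrightarrow> (case t of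
      Empty \<Rightarrow> True
    | PN S cs \<Rightarrow>
        (S = {} \<longrightarrow> (\<forall>c\<in>set cs. \<forall>cs'. c \<noteq> PN {} cs')) \<and>
        (\<forall>c. cs = [c] \<longrightarrow> (\<forall>S' cs'. c \<noteq> PN S' cs')) \<and>
        Empty \<notin> set cs
    | QN ss \<Rightarrow> (let k = length ss; Sec = (\<lambda>i. fst (ss ! i)); Vs = (\<lambda>i. tree_verts (snd (ss ! i))) in
        k \<ge> 3 \<and>
        (\<forall>v \<in> node_verts t. \<exists>l r. l < r \<and> r < k \<and> sec_idx ss v = {l..r}) \<and>
        Vs 0 \<noteq> {} \<and> Vs (k - 1) \<noteq> {} \<and>
        Sec 0 \<subseteq> Sec 1 \<and> Sec (k - 1) \<subseteq> Sec (k - 2) \<and>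
        (\<forall>i. 1 \<le> i \<and> i \<le> k - 1 \<longrightarrow> Sec (i - 1) \<inter> Sec i \<noteq> {}) \<and>
        (\<forall>i. 1 \<le> i \<and> i \<le> k - 1 \<longrightarrow> Sec (i - 1) \<noteq> Sec i) \<and>
        (\<forall>i. 1 \<le> i \<and> i \<le> k - 2 \<longrightarrow>
            (Sec i \<inter> Sec (i + 1)) - Sec 0 \<noteq> {} \<and> (Sec (i - 1) \<inter> Sec i) - Sec (k - 1) \<noteq> {}) \<and>
        (\<forall>i. 1 \<le> i \<and> i \<le> k - 1 \<longrightarrow>
            (Sec (i - 1) \<union> Vs (i - 1)) - Sec i \<noteq> {} \<and> (Sec i \<union> Vs i) - Sec (i - 1) \<noteq> {})))"

definition is_mpq_tree :: "'a set \<Rightarrow> 'a set set \<Rightarrow> 'a mpq \<Rightarrow> bool" where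
  "is_mpq_tree V E T \<longleftrightarrow>
     T \<noteq> Empty \<and>
     tree_verts T \<subseteq> V \<and>
     (\<forall>v\<in>V. \<exists>!p. assigned T v p) \<and>
     distinct (cliques T) \<and> set (cliques T) = max_cliques V E \<and>
     {cliques T' | T'. equiv_tree T T'} = {L. consecutive_clique_order V E L} \<and>
     (\<forall>p t. subtree_at T p = Some t \<longrightarrow> node_ok t)"

text \<open>x is over y: node(x) is the lowest common ancestor of node(x) and node(y),
  i.e. node(x) is an ancestor of (or equal to) node(y).\<close>
definition over :: "'a mpq \<Rightarrow> 'a \<Rightarrow> 'a \<Rightarrow> bool" where
  "over T x y \<longleftrightarrow> (\<exists>rest. node_of T y = node_of T x @ rest)"

definition starts_in_central :: "'a mpq \<Rightarrow> 'a \<Rightarrow> 'a \<Rightarrow> ('a set \<times> 'a mpq) list \<Rightarrow> nat \<Rightarrow> bool" where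
  "starts_in_central T x y ss a \<longleftrightarrow>
     subtree_at T (node_of T x) = Some (QN ss) \<and>
     (\<exists>rest. node_of T y = node_of T x @ a # rest) \<and>
     lsec ss x < a \<and> a < rsec ss x"

end

theory Submission
  imports Defs
begin


lemma subtree_at_append: "subtree_at T p = Some t \<Longrightarrow> subtree_at T (p @ p') = subtree_at t p'"
  by (induction T p rule: subtree_at.induct) (auto split: if_splits)

lemma assigned_append: "subtree_at T p = Some t \<Longrightarrow> assigned t v p' \<Longrightarrow> assigned T v (p @ p')"
  by (simp add: assigned_def subtree_at_append)

lemma node_verts_sub: "node_verts t \<subseteq> tree_verts t"
proof (cases t)
  case (QN ss)
  show ?thesis unfolding QN
  proof
    fix v assume "v \<in> node_verts (QN ss)"
    then obtain i where i: "i < length ss" "v \<in> fst (ss ! i)" by auto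
    then have "ss ! i \<in> set ss" by simp
    with i show "v \<in> tree_verts (QN ss)" by (cases "ss ! i") force
  qed
qed auto

lemma subtree_verts: "subtree_at T p = Some t \<Longrightarrow> tree_verts t \<subseteq> tree_verts T"
proof (induction T p rule: subtree_at.induct)
  case (3 S cs i p)
  then have "i < length cs" by (auto split: if_splits)
  with 3 show ?case by (auto split: if_splits)
next
  case (4 ss i p)
  then have i: "i < length ss" by (auto split: if_splits)
  then have "ss ! i \<in> set ss" by simp
  with 4 i show ?case by (cases "ss ! i") (force split: if_splits)
qed auto

lemma tree_verts_assigned: "v \<in> tree_verts t \<Longrightarrow> \<exists>p. assigned t v p"
proof (induction t)
  case Empty
  then show ?case by simp
next
  case (PN S cs)
  show ?case
  proof (cases "v \<in> S")
    case True
    then show ?thesis by (rule_tac x="[]" in exI) (simp add: assigned_def)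
  next
    case False
    with PN.prems obtain c where c: "c \<in> set cs" "v \<in> tree_verts c" by auto
    then obtain i where i: "i < length cs" "cs ! i = c" by (auto simp: in_set_conv_nth)
    from PN.IH[OF c] obtain p where "assigned c v p" by blast
    with i show ?thesis
      by (rule_tac x="i # p" in exI) (simp add: assigned_def)
  qed
next
  case (QN ss)
  from QN.prems obtain S c where Sc: "(S, c) \<in> set ss" "v \<in> S \<or> v \<in> tree_verts c" by auto
  then obtain i where i: "i < length ss" "ss ! i = (S, c)" by (auto simp: in_set_conv_nth)
  show ?case
  proof (cases "v \<in> S")
    case True
    with i show ?thesis
      by (rule_tac x="[]" in exI) (force simp: assigned_def)
  next
    case False
    with Sc have "v \<in> tree_verts c" by auto
    from QN.IH[OF Sc(1) _ this] obtain p where "assigned c v p" by auto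
    with i show ?thesis
      by (rule_tac x="i # p" in exI) (simp add: assigned_def)
  qed
qed

lemma cliques_sub: "C \<in> set (cliques t) \<Longrightarrow> C \<subseteq> tree_verts t"
proof (induction t arbitrary: C)
  case Empty
  then show ?case by simp
next
  case (PN S cs)
  then show ?case by (auto split: if_splits)
next
  case (QN ss)
  from QN.prems obtain S c D where "(S, c) \<in> set ss" "D \<in> set (cliques c)" "C = S \<union> D"
    by auto
  with QN.IH show ?case by fastforce
qed

definition wf_tree :: "'a mpq \<Rightarrow> bool" where
  "wf_tree t \<longleftrightarrow> (\<forall>p s. subtree_at t p = Some s \<longrightarrow> node_ok s)"

lemma wf_tree_sub: "wf_tree T \<Longrightarrow> subtree_at T p = Some t \<Longrightarrow> wf_tree t"
  unfolding wf_tree_def by (metis subtree_at_append)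

lemma nodeok_QN_len: "node_ok (QN ss) \<Longrightarrow> 3 \<le> length ss"
  by (simp add: node_ok_def Let_def)

lemma nodeok_QN_span: "node_ok (QN ss) \<Longrightarrow> v \<in> node_verts (QN ss) \<Longrightarrow>
   \<exists>l r. l < r \<and> r < length ss \<and> sec_idx ss v = {l..r}"
  unfolding node_ok_def Let_def by (simp only: mpq.case)

lemma cliques_ne: "wf_tree t \<Longrightarrow> cliques t \<noteq> []"
proof (induction t)
  case Empty
  then show ?case by simp
next
  case (PN S cs)
  show ?case
  proof (cases cs)
    case Nil
    then show ?thesis by simp
  next
    case (Cons c cs')
    have "subtree_at (PN S cs) [0] = Some c" using Cons by simp
    with PN.prems have "wf_tree c" by (rule wf_tree_sub)
    with PN.IH[of c] Cons show ?thesis by simp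
  qed
next
  case (QN ss)
  have "node_ok (QN ss)" using QN.prems unfolding wf_tree_def by (metis subtree_at.simps(1))
  then have "3 \<le> length ss" by (rule nodeok_QN_len)
  then obtain S c ss' where ss: "ss = (S, c) # ss'" by (cases ss) auto
  have "subtree_at (QN ss) [0] = Some c" using ss by simp
  with QN.prems have "wf_tree c" by (rule wf_tree_sub)
  with QN.IH[of "(S,c)" c] ss show ?case by simp
qed



lemma set_cliques_PN: "cs \<noteq> [] \<Longrightarrow> set (cliques (PN S cs)) = (\<Union>c\<in>set cs. (\<union>) S ` set (cliques c))"
  by auto

lemma set_cliques_QN: "set (cliques (QN ss)) = (\<Union>(S,c)\<in>set ss. (\<union>) S ` set (cliques c))"
  by auto

lemma list_all2_map_eq: "list_all2 R xs ys \<Longrightarrow> (\<And>a b. R a b \<Longrightarrow> f a = g b) \<Longrightarrow> map f xs = map g ys"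
  by (induction rule: list_all2_induct) auto

lemma UN_map_eq: "map f xs = map f ys \<Longrightarrow> (\<Union>x\<in>set xs. f x) = (\<Union>x\<in>set ys. f x)"
  by (metis set_map)

lemma equiv_cliques: "equiv_tree t t' \<Longrightarrow> set (cliques t') = set (cliques t)"
proof (induction rule: equiv_tree.induct)
  case 1
  then show ?case by simp
next
  case (2 cs ds ds' S)
  have m: "map (\<lambda>c. (\<union>) S ` set (cliques c)) cs = map (\<lambda>c. (\<union>) S ` set (cliques c)) ds"
    using 2(1) by (rule list_all2_map_eq) auto
  have sd: "set ds' = set ds" using 2(2) by (metis set_mset_mset)
  have lens: "length cs = length ds" using 2(1) by (rule list_all2_lengthD)
  show ?case
  proof (cases "cs = []")
    case True
    then have "ds = []" using lens by simp
    then have "ds' = []" using sd by simp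
    with True show ?thesis by simp
  next
    case False
    then have "ds \<noteq> []" using lens by auto
    then have "ds' \<noteq> []" using sd by auto
    have "(\<Union>c\<in>set cs. (\<union>) S ` set (cliques c)) = (\<Union>c\<in>set ds. (\<union>) S ` set (cliques c))"
      by (rule UN_map_eq[OF m])
    then have "(\<Union>c\<in>set ds'. (\<union>) S ` set (cliques c)) = (\<Union>c\<in>set cs. (\<union>) S ` set (cliques c))"
      using sd by simp
    then show ?thesis by (simp only: set_cliques_PN[OF False] set_cliques_PN[OF \<open>ds' \<noteq> []\<close>])
  qed
next
  case (3 ss ss')
  have m: "map (\<lambda>(S,c). (\<union>) S ` set (cliques c)) ss = map (\<lambda>(S,c). (\<union>) S ` set (cliques c)) ss'"
    using 3 by (rule list_all2_map_eq) auto
  then have "(\<Union>(S,c)\<in>set ss. (\<union>) S ` set (cliques c)) = (\<Union>(S,c)\<in>set ss'. (\<union>) S ` set (cliques c))"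
    using UN_map_eq[OF m] by simp
  then show ?case by (simp only: set_cliques_QN)
next
  case (4 ss ss')
  have m: "map (\<lambda>(S,c). (\<union>) S ` set (cliques c)) ss = map (\<lambda>(S,c). (\<union>) S ` set (cliques c)) ss'"
    using 4 by (rule list_all2_map_eq) auto
  then have "(\<Union>(S,c)\<in>set ss. (\<union>) S ` set (cliques c)) = (\<Union>(S,c)\<in>set (rev ss'). (\<union>) S ` set (cliques c))"
    using UN_map_eq[OF m] by simp
  then show ?case by (simp only: set_cliques_QN)
qed

definition uniq :: "'a mpq \<Rightarrow> bool" where
  "uniq T \<longleftrightarrow> (\<forall>v p1 p2. assigned T v p1 \<longrightarrow> assigned T v p2 \<longrightarrow> p1 = p2)"

definition anc :: "'a mpq \<Rightarrow> nat list \<Rightarrow> 'a set \<Rightarrow> bool" where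
  "anc T p A \<longleftrightarrow> (\<forall>v\<in>A. \<exists>p0 i p1. p = p0 @ i # p1 \<and> assigned T v p0)"

lemma up: "subtree_at T p = Some t \<Longrightarrow> C \<in> set (cliques t) \<Longrightarrow>
    \<exists>A. A \<union> C \<in> set (cliques T) \<and> anc T p A"
proof (induction T p arbitrary: t rule: subtree_at.induct)
  case (1 t)
  then show ?case by (rule_tac x="{}" in exI) (simp add: anc_def)
next
  case (2 i p)
  then show ?case by simp
next
  case (3 S cs i p)
  then have i: "i < length cs" and st: "subtree_at (cs ! i) p = Some t" by (auto split: if_splits)
  from "3.IH"[OF i st "3.prems"(2)] obtain A where A: "A \<union> C \<in> set (cliques (cs ! i))" "anc (cs ! i) p A"
    by blast
  have cs: "cs \<noteq> []" using i by auto
  have ci: "cs ! i \<in> set cs" using i by simp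
  have "S \<union> (A \<union> C) \<in> (\<union>) S ` set (cliques (cs ! i))" using A(1) by (rule imageI)
  with ci have "S \<union> (A \<union> C) \<in> set (cliques (PN S cs))"
    unfolding set_cliques_PN[OF cs] by (rule UN_I)
  moreover have "anc (PN S cs) (i # p) (S \<union> A)"
    unfolding anc_def
  proof
    fix v assume "v \<in> S \<union> A"
    then show "\<exists>p0 i' p1. i # p = p0 @ i' # p1 \<and> assigned (PN S cs) v p0"
    proof
      assume "v \<in> S"
      then show ?thesis by (rule_tac x="[]" in exI) (simp add: assigned_def)
    next
      assume "v \<in> A"
      with A(2) obtain p0 i' p1 where "p = p0 @ i' # p1" "assigned (cs ! i) v p0"
        unfolding anc_def by blast
      with i show ?thesis
        by (rule_tac x="i # p0" in exI) (simp add: assigned_def)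
    qed
  qed
  ultimately show ?case by (metis (no_types) sup_assoc)
next
  case (4 ss i p)
  then have i: "i < length ss" and st: "subtree_at (snd (ss ! i)) p = Some t" by (auto split: if_splits)
  from "4.IH"[OF i st "4.prems"(2)] obtain A where A: "A \<union> C \<in> set (cliques (snd (ss ! i)))" "anc (snd (ss ! i)) p A"
    by blast
  have mem: "ss ! i \<in> set ss" using i by simp
  obtain S0 c0 where sc: "ss ! i = (S0, c0)" by (cases "ss ! i")
  have "S0 \<union> (A \<union> C) \<in> (\<union>) S0 ` set (cliques c0)" using A(1) sc by simp
  with mem sc have "fst (ss ! i) \<union> (A \<union> C) \<in> set (cliques (QN ss))"
    unfolding set_cliques_QN by (metis (no_types, lifting) UN_I case_prod_conv fst_conv)
  moreover have "anc (QN ss) (i # p) (fst (ss ! i) \<union> A)"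
    unfolding anc_def
  proof
    fix v assume "v \<in> fst (ss ! i) \<union> A"
    then show "\<exists>p0 i' p1. i # p = p0 @ i' # p1 \<and> assigned (QN ss) v p0"
    proof
      assume "v \<in> fst (ss ! i)"
      with i show ?thesis by (rule_tac x="[]" in exI) (auto simp add: assigned_def)
    next
      assume "v \<in> A"
      with A(2) obtain p0 i' p1 where "p = p0 @ i' # p1" "assigned (snd (ss ! i)) v p0"
        unfolding anc_def by blast
      with i show ?thesis
        by (rule_tac x="i # p0" in exI) (simp add: assigned_def)
    qed
  qed
  ultimately show ?case by (metis (no_types) sup_assoc)
qed



lemma assigned_PN_Cons: "assigned (PN S cs) v (i # p) \<longleftrightarrow> i < length cs \<and> assigned (cs ! i) v p"
  by (simp add: assigned_def)

lemma assigned_QN_Cons: "assigned (QN ss) v (i # p) \<longleftrightarrow> i < length ss \<and> assigned (snd (ss ! i)) v p"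
  by (simp add: assigned_def)

lemma uniq_PN: "uniq (PN S cs) \<Longrightarrow> i < length cs \<Longrightarrow> uniq (cs ! i)"
  unfolding uniq_def
proof (intro allI impI)
  fix v p1 p2 assume u: "\<forall>v p1 p2. assigned (PN S cs) v p1 \<longrightarrow> assigned (PN S cs) v p2 \<longrightarrow> p1 = p2"
    and i: "i < length cs" and a: "assigned (cs ! i) v p1" "assigned (cs ! i) v p2"
  then have "assigned (PN S cs) v (i # p1)" "assigned (PN S cs) v (i # p2)" by (simp_all add: assigned_PN_Cons)
  with u have "i # p1 = i # p2" by blast
  then show "p1 = p2" by simp
qed

lemma uniq_QN: "uniq (QN ss) \<Longrightarrow> i < length ss \<Longrightarrow> uniq (snd (ss ! i))"
  unfolding uniq_def
proof (intro allI impI)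
  fix v p1 p2 assume u: "\<forall>v p1 p2. assigned (QN ss) v p1 \<longrightarrow> assigned (QN ss) v p2 \<longrightarrow> p1 = p2"
    and i: "i < length ss" and a: "assigned (snd (ss ! i)) v p1" "assigned (snd (ss ! i)) v p2"
  then have "assigned (QN ss) v (i # p1)" "assigned (QN ss) v (i # p2)" by (simp_all add: assigned_QN_Cons)
  with u have "i # p1 = i # p2" by blast
  then show "p1 = p2" by simp
qed

lemma anc_PN:
  assumes i: "i < length cs" and A: "anc (cs ! i) p A"
  shows "anc (PN S cs) (i # p) (S \<union> A)"
  unfolding anc_def
proof
  fix v assume v: "v \<in> S \<union> A"
  show "\<exists>p0 i' p1. i # p = p0 @ i' # p1 \<and> assigned (PN S cs) v p0"
  proof (cases "v \<in> S")
    case True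
    then have "i # p = [] @ i # p \<and> assigned (PN S cs) v []" by (simp add: assigned_def)
    then show ?thesis by blast
  next
    case False
    with v A obtain p0 i' p1 where "p = p0 @ i' # p1" "assigned (cs ! i) v p0"
      unfolding anc_def by blast
    with i have "i # p = (i # p0) @ i' # p1 \<and> assigned (PN S cs) v (i # p0)"
      by (simp add: assigned_PN_Cons)
    then show ?thesis by blast
  qed
qed

lemma anc_QN:
  assumes i: "i < length ss" and A: "anc (snd (ss ! i)) p A"
  shows "anc (QN ss) (i # p) (fst (ss ! i) \<union> A)"
  unfolding anc_def
proof
  fix v assume v: "v \<in> fst (ss ! i) \<union> A"
  show "\<exists>p0 i' p1. i # p = p0 @ i' # p1 \<and> assigned (QN ss) v p0"
  proof (cases "v \<in> fst (ss ! i)")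
    case True
    with i have "v \<in> node_verts (QN ss)" by auto
    then have "i # p = [] @ i # p \<and> assigned (QN ss) v []" by (simp add: assigned_def del: node_verts.simps)
    then show ?thesis by blast
  next
    case False
    with v A obtain p0 i' p1 where "p = p0 @ i' # p1" "assigned (snd (ss ! i)) v p0"
      unfolding anc_def by blast
    with i have "i # p = (i # p0) @ i' # p1 \<and> assigned (QN ss) v (i # p0)"
      by (simp add: assigned_QN_Cons)
    then show ?thesis by blast
  qed
qed

lemma down: "subtree_at T p = Some t \<Longrightarrow> C \<in> set (cliques T) \<Longrightarrow> C \<inter> tree_verts t \<noteq> {} \<Longrightarrow> uniq T \<Longrightarrow>
    \<exists>A C'. C = A \<union> C' \<and> C' \<in> set (cliques t) \<and> anc T p A"
proof (induction T p arbitrary: t C rule: subtree_at.induct)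
  case (1 t)
  then show ?case by (rule_tac x="{}" in exI) (auto simp add: anc_def)
next
  case (2 i p)
  then show ?case by simp
next
  case (3 S cs i p)
  then have i: "i < length cs" and st: "subtree_at (cs ! i) p = Some t" by (auto split: if_splits)
  have cs: "cs \<noteq> []" using i by auto
  from "3.prems"(2) obtain c D where c: "c \<in> set cs" "D \<in> set (cliques c)" "C = S \<union> D"
    unfolding set_cliques_PN[OF cs] by blast
  from c(1) obtain j where j: "j < length cs" "cs ! j = c" by (auto simp: in_set_conv_nth)
  from "3.prems"(3) obtain w where w: "w \<in> C" "w \<in> tree_verts t" by blast
  from tree_verts_assigned[OF w(2)] obtain p' where "assigned t w p'" by blast
  then have aw: "assigned (PN S cs) w ((i # p) @ p')"
    using assigned_append[OF "3.prems"(1)] by blast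
  have wS: "w \<notin> S"
  proof
    assume "w \<in> S"
    then have "assigned (PN S cs) w []" by (simp add: assigned_def)
    with aw "3.prems"(4) show False unfolding uniq_def by blast
  qed
  with w c have wD: "w \<in> D" by blast
  with cliques_sub[OF c(2)] have "w \<in> tree_verts c" by blast
  from tree_verts_assigned[OF this] obtain p'' where "assigned c w p''" by blast
  with j have "assigned (PN S cs) w (j # p'')" by (simp add: assigned_def)
  with aw "3.prems"(4) have "j # p'' = (i # p) @ p'" unfolding uniq_def by blast
  then have "j = i" by simp
  with j c have D: "D \<in> set (cliques (cs ! i))" by simp
  have "D \<inter> tree_verts t \<noteq> {}" using wD w by blast
  from "3.IH"[OF i st D this uniq_PN[OF "3.prems"(4) i]] obtain A C' where
    A: "D = A \<union> C'" "C' \<in> set (cliques t)" "anc (cs ! i) p A" by blast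
  have "C = (S \<union> A) \<union> C'" using A c by blast
  with A(2) anc_PN[OF i A(3)] show ?case by blast
next
  case (4 ss i p)
  then have i: "i < length ss" and st: "subtree_at (snd (ss ! i)) p = Some t" by (auto split: if_splits)
  from "4.prems"(2) obtain S0 c D where c: "(S0, c) \<in> set ss" "D \<in> set (cliques c)" "C = S0 \<union> D"
    unfolding set_cliques_QN by blast
  from c(1) obtain j where j: "j < length ss" "ss ! j = (S0, c)" by (auto simp: in_set_conv_nth)
  from "4.prems"(3) obtain w where w: "w \<in> C" "w \<in> tree_verts t" by blast
  from tree_verts_assigned[OF w(2)] obtain p' where "assigned t w p'" by blast
  then have aw: "assigned (QN ss) w ((i # p) @ p')"
    using assigned_append[OF "4.prems"(1)] by blast
  have wS: "w \<notin> S0"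
  proof
    assume "w \<in> S0"
    then have "w \<in> fst (ss ! j)" using j by simp
    then have "w \<in> node_verts (QN ss)" using j(1) by auto
    then have "assigned (QN ss) w []" by (simp add: assigned_def del: node_verts.simps)
    with aw "4.prems"(4) show False unfolding uniq_def by blast
  qed
  with w c have wD: "w \<in> D" by blast
  with cliques_sub[OF c(2)] have "w \<in> tree_verts c" by blast
  from tree_verts_assigned[OF this] obtain p'' where "assigned c w p''" by blast
  with j have "assigned (QN ss) w (j # p'')" by (simp add: assigned_def)
  with aw "4.prems"(4) have "j # p'' = (i # p) @ p'" unfolding uniq_def by blast
  then have "j = i" by simp
  with j c have D: "D \<in> set (cliques (snd (ss ! i)))" by simp
  have "D \<inter> tree_verts t \<noteq> {}" using wD w by blast
  from "4.IH"[OF i st D this uniq_QN[OF "4.prems"(4) i]] obtain A C' where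
    A: "D = A \<union> C'" "C' \<in> set (cliques t)" "anc (snd (ss ! i)) p A" by blast
  have "fst (ss ! i) = S0" using j \<open>j = i\<close> by simp
  then have "C = (fst (ss ! i) \<union> A) \<union> C'" using A c by blast
  with A(2) anc_QN[OF i A(3)] show ?case by blast
qed



definition phi :: "'a \<Rightarrow> 'a \<Rightarrow> 'a set list \<Rightarrow> bool" where
  "phi x y L \<longleftrightarrow> (\<exists>i j m. i < j \<and> j < m \<and> m < length L \<and> x \<in> L ! i \<and> y \<notin> L ! i \<and>
      x \<in> L ! j \<and> y \<in> L ! j \<and> x \<in> L ! m \<and> y \<notin> L ! m)"

lemma phi_map: "phi x y L \<Longrightarrow> x \<notin> S \<Longrightarrow> y \<notin> S \<Longrightarrow> phi x y (map ((\<union>) S) L)"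
proof -
  assume "phi x y L" "x \<notin> S" "y \<notin> S"
  then obtain i j m where ijm: "i < j" "j < m" "m < length L" "x \<in> L ! i" "y \<notin> L ! i"
    "x \<in> L ! j" "y \<in> L ! j" "x \<in> L ! m" "y \<notin> L ! m" unfolding phi_def by blast
  then have "i < length L" "j < length L" by simp_all
  with ijm \<open>y \<notin> S\<close> show ?thesis unfolding phi_def
    by (intro exI[of _ i] exI[of _ j] exI[of _ m]) simp
qed

lemma phi_concat: assumes "b \<in> set bs" "phi x y b" shows "phi x y (concat bs)"
proof -
  obtain us ws where bs: "bs = us @ b # ws" using split_list[OF assms(1)] by blast
  define n where "n = length (concat us)"
  have c: "concat bs = concat us @ b @ concat ws" using bs by simp
  have nth: "\<And>k. k < length b \<Longrightarrow> concat bs ! (n + k) = b ! k"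
    unfolding c n_def by (simp add: nth_append)
  from assms(2) obtain i j m where ijm: "i < j" "j < m" "m < length b" "x \<in> b ! i" "y \<notin> b ! i"
    "x \<in> b ! j" "y \<in> b ! j" "x \<in> b ! m" "y \<notin> b ! m" unfolding phi_def by blast
  have len: "n + m < length (concat bs)" unfolding c n_def using ijm(3) by simp
  show ?thesis unfolding phi_def
    apply (rule exI[of _ "n + i"], rule exI[of _ "n + j"], rule exI[of _ "n + m"])
    using ijm len nth[of i] nth[of j] nth[of m] by simp
qed

lemma concat_idx:
  assumes "i < length bs" "e \<in> set (bs ! i)"
  shows "\<exists>n. concat bs ! n = e \<and> length (concat (take i bs)) \<le> n \<and> n < length (concat (take (Suc i) bs))"
proof -
  obtain k where k: "k < length (bs ! i)" "bs ! i ! k = e" using assms(2) by (auto simp: in_set_conv_nth)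
  have bs: "bs = take i bs @ bs ! i # drop (Suc i) bs" using assms(1) by (rule id_take_nth_drop)
  have c: "concat bs = concat (take i bs) @ bs ! i @ concat (drop (Suc i) bs)"
    by (subst bs) simp
  have t: "concat (take (Suc i) bs) = concat (take i bs) @ bs ! i"
    using assms(1) by (simp add: take_Suc_conv_app_nth)
  show ?thesis
    apply (rule exI[of _ "length (concat (take i bs)) + k"])
    using k by (simp add: c t nth_append)
qed

lemma concat_take_mono: "i \<le> j \<Longrightarrow> length (concat (take i bs)) \<le> length (concat (take j bs))"
proof -
  assume "i \<le> j"
  then have "take j bs = take i bs @ take (j - i) (drop i bs)"
    by (metis le_add_diff_inverse take_add)
  then show ?thesis by (metis concat_append le_add1 length_append)
qed

lemma concat_take_len: "length (concat (take i bs)) \<le> length (concat bs)"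
  by (metis append_take_drop_id concat_append le_add1 length_append)

lemma phi_blocks:
  assumes "i < j" "j < m" "m < length bs" "e1 \<in> set (bs ! i)" "e2 \<in> set (bs ! j)" "e3 \<in> set (bs ! m)"
    "x \<in> e1" "y \<notin> e1" "x \<in> e2" "y \<in> e2" "x \<in> e3" "y \<notin> e3"
  shows "phi x y (concat bs)"
proof -
  obtain n1 where n1: "concat bs ! n1 = e1" "n1 < length (concat (take (Suc i) bs))"
    using concat_idx[of i bs e1] assms by auto
  obtain n2 where n2: "concat bs ! n2 = e2" "length (concat (take j bs)) \<le> n2" "n2 < length (concat (take (Suc j) bs))"
    using concat_idx[of j bs e2] assms by auto
  obtain n3 where n3: "concat bs ! n3 = e3" "length (concat (take m bs)) \<le> n3" "n3 < length (concat (take (Suc m) bs))"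
    using concat_idx[of m bs e3] assms by auto
  have "length (concat (take (Suc i) bs)) \<le> length (concat (take j bs))"
    using assms(1) by (intro concat_take_mono) simp
  moreover have "length (concat (take (Suc j) bs)) \<le> length (concat (take m bs))"
    using assms(2) by (intro concat_take_mono) simp
  moreover have "length (concat (take (Suc m) bs)) \<le> length (concat bs)" by (rule concat_take_len)
  ultimately have "n1 < n2" "n2 < n3" "n3 < length (concat bs)" using n1 n2 n3 by linarith+
  then show ?thesis unfolding phi_def using n1 n2 n3 assms by blast
qed



lemma cliques_PN_ne: "cs \<noteq> [] \<Longrightarrow> cliques (PN S cs) = concat (map (\<lambda>c. map ((\<union>) S) (cliques c)) cs)"
  by simp

lemma lift:
  "subtree_at T p = Some t \<Longrightarrow> (\<forall>t'. equiv_tree t t' \<longrightarrow> phi x y (cliques t')) \<Longrightarrow>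
   (\<forall>p0 i p1 s. p = p0 @ i # p1 \<longrightarrow> subtree_at T p0 = Some s \<longrightarrow> x \<notin> node_verts s \<and> y \<notin> node_verts s) \<Longrightarrow>
   equiv_tree T T' \<Longrightarrow> phi x y (cliques T')"
proof (induction T p arbitrary: t T' rule: subtree_at.induct)
  case (1 t)
  then show ?case by simp
next
  case (2 i p)
  then show ?case by simp
next
  case (3 S cs i p)
  then have i: "i < length cs" and st: "subtree_at (cs ! i) p = Some t" by (auto split: if_splits)
  from "3.prems"(4) obtain ds ds' where T': "T' = PN S ds'" and la: "list_all2 equiv_tree cs ds"
    and ms: "mset ds' = mset ds"
    by (cases rule: equiv_tree.cases) auto
  have len: "length ds = length cs" using la by (simp add: list_all2_lengthD)
  have eq: "equiv_tree (cs ! i) (ds ! i)" using la i by (simp add: list_all2_conv_all_nth)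
  have hyp: "\<forall>p0 i' p1 s. p = p0 @ i' # p1 \<longrightarrow> subtree_at (cs ! i) p0 = Some s \<longrightarrow> x \<notin> node_verts s \<and> y \<notin> node_verts s"
  proof (intro allI impI)
    fix p0 i' p1 s assume "p = p0 @ i' # p1" "subtree_at (cs ! i) p0 = Some s"
    then have "i # p = (i # p0) @ i' # p1" "subtree_at (PN S cs) (i # p0) = Some s" using i by simp_all
    with "3.prems"(3) show "x \<notin> node_verts s \<and> y \<notin> node_verts s" by blast
  qed
  have ph: "phi x y (cliques (ds ! i))" using "3.IH"[OF i st "3.prems"(2) hyp eq] .
  have xyS: "x \<notin> S" "y \<notin> S" using "3.prems"(3)[rule_format, of "[]" i p "PN S cs"] by simp_all
  have dsi: "ds ! i \<in> set ds'" using ms i len by (metis nth_mem set_mset_mset)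
  then have ne: "ds' \<noteq> []" by auto
  have "map ((\<union>) S) (cliques (ds ! i)) \<in> set (map (\<lambda>c. map ((\<union>) S) (cliques c)) ds')"
    using dsi by simp
  from phi_concat[OF this phi_map[OF ph xyS]] show ?case unfolding T' cliques_PN_ne[OF ne] .
next
  case (4 ss i p)
  then have i: "i < length ss" and st: "subtree_at (snd (ss ! i)) p = Some t" by (auto split: if_splits)
  from "4.prems"(4) obtain ss' ss'' where T': "T' = QN ss''" and ss'': "ss'' = ss' \<or> ss'' = rev ss'"
    and la: "list_all2 (\<lambda>a b. fst a = fst b \<and> equiv_tree (snd a) (snd b)) ss ss'"
    by (cases rule: equiv_tree.cases) auto
  have len: "length ss' = length ss" using la by (simp add: list_all2_lengthD)
  have eq: "fst (ss ! i) = fst (ss' ! i)" "equiv_tree (snd (ss ! i)) (snd (ss' ! i))"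
    using la i by (simp_all add: list_all2_conv_all_nth)
  have hyp: "\<forall>p0 i' p1 s. p = p0 @ i' # p1 \<longrightarrow> subtree_at (snd (ss ! i)) p0 = Some s \<longrightarrow> x \<notin> node_verts s \<and> y \<notin> node_verts s"
  proof (intro allI impI)
    fix p0 i' p1 s assume "p = p0 @ i' # p1" "subtree_at (snd (ss ! i)) p0 = Some s"
    then have "i # p = (i # p0) @ i' # p1" "subtree_at (QN ss) (i # p0) = Some s" using i by simp_all
    with "4.prems"(3) show "x \<notin> node_verts s \<and> y \<notin> node_verts s" by blast
  qed
  have ph: "phi x y (cliques (snd (ss' ! i)))" using "4.IH"[OF i st "4.prems"(2) hyp eq(2)] .
  have nv: "x \<notin> node_verts (QN ss)" "y \<notin> node_verts (QN ss)"
    using "4.prems"(3)[rule_format, of "[]" i p "QN ss"] by simp_all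
  have xyS: "x \<notin> fst (ss' ! i)" "y \<notin> fst (ss' ! i)" using nv i eq(1) by auto
  have mem: "ss' ! i \<in> set ss''" using ss'' i len by auto
  obtain S0 c0 where sc: "ss' ! i = (S0, c0)" by (cases "ss' ! i")
  have "map ((\<union>) S0) (cliques c0) \<in> set (map (\<lambda>(S, t). map ((\<union>) S) (cliques t)) ss'')"
    using mem sc by (metis (no_types, lifting) case_prod_conv image_eqI set_map)
  from phi_concat[OF this phi_map[OF ph[unfolded sc snd_conv] xyS[unfolded sc fst_conv]]] show ?case
    unfolding T' by simp
qed

lemma base:
  assumes lar: "l < a" "a < r" "r < length ss"
    and x: "x \<in> fst (ss ! l)" "x \<in> fst (ss ! a)" "x \<in> fst (ss ! r)"
    and ny: "\<forall>j<length ss. y \<notin> fst (ss ! j)"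
    and yl: "y \<notin> tree_verts (snd (ss ! l))" and yr: "y \<notin> tree_verts (snd (ss ! r))"
    and ya: "\<exists>C\<in>set (cliques (snd (ss ! a))). y \<in> C"
    and nl: "cliques (snd (ss ! l)) \<noteq> []" and nr: "cliques (snd (ss ! r)) \<noteq> []"
    and eqv: "equiv_tree (QN ss) t'"
  shows "phi x y (cliques t')"
proof -
  from eqv obtain ss' ss'' where T': "t' = QN ss''" and ss'': "ss'' = ss' \<or> ss'' = rev ss'"
    and la: "list_all2 (\<lambda>a b. fst a = fst b \<and> equiv_tree (snd a) (snd b)) ss ss'"
    by (cases rule: equiv_tree.cases) auto
  define g where "g = (\<lambda>(S::'a set, c). map ((\<union>) S) (cliques c))"
  have len: "length ss' = length ss" using la by (simp add: list_all2_lengthD)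
  have gset: "set (g (ss' ! j)) = (\<union>) (fst (ss ! j)) ` set (cliques (snd (ss ! j)))" if j: "j < length ss" for j
  proof -
    have "fst (ss ! j) = fst (ss' ! j)" "equiv_tree (snd (ss ! j)) (snd (ss' ! j))"
      using la j by (simp_all add: list_all2_conv_all_nth)
    then show ?thesis unfolding g_def by (cases "ss' ! j") (simp add: equiv_cliques)
  qed
  have El: "\<exists>e\<in>set (g (ss' ! l)). x \<in> e \<and> y \<notin> e"
  proof -
    obtain C where C: "C \<in> set (cliques (snd (ss ! l)))" using nl by (cases "cliques (snd (ss ! l))") auto
    have "y \<notin> C" using cliques_sub[OF C] yl by blast
    moreover have "y \<notin> fst (ss ! l)" using ny lar by simp
    ultimately show ?thesis using gset[of l] lar x C by auto
  qed
  have Er: "\<exists>e\<in>set (g (ss' ! r)). x \<in> e \<and> y \<notin> e"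
  proof -
    obtain C where C: "C \<in> set (cliques (snd (ss ! r)))" using nr by (cases "cliques (snd (ss ! r))") auto
    have "y \<notin> C" using cliques_sub[OF C] yr by blast
    moreover have "y \<notin> fst (ss ! r)" using ny lar by simp
    ultimately show ?thesis using gset[of r] lar x C by auto
  qed
  have Ea: "\<exists>e\<in>set (g (ss' ! a)). x \<in> e \<and> y \<in> e"
  proof -
    obtain C where C: "C \<in> set (cliques (snd (ss ! a)))" "y \<in> C" using ya by blast
    then show ?thesis using gset[of a] lar x C by auto
  qed
  obtain e1 e2 e3 where e: "e1 \<in> set (g (ss' ! l))" "x \<in> e1" "y \<notin> e1"
    "e2 \<in> set (g (ss' ! a))" "x \<in> e2" "y \<in> e2"
    "e3 \<in> set (g (ss' ! r))" "x \<in> e3" "y \<notin> e3" using El Ea Er by blast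
  have cl: "cliques t' = concat (map g ss'')" unfolding T' g_def by simp
  from ss'' show ?thesis
  proof
    assume s: "ss'' = ss'"
    have "phi x y (concat (map g ss'))"
      apply (rule phi_blocks[of l a r _ e1 e2 e3])
      using lar len e by simp_all
    then show ?thesis using cl s by simp
  next
    assume s: "ss'' = rev ss'"
    define n where "n = length ss"
    have r1: "rev ss' ! (n - Suc r) = ss' ! r" "rev ss' ! (n - Suc a) = ss' ! a" "rev ss' ! (n - Suc l) = ss' ! l"
      using lar len unfolding n_def by (simp_all add: rev_nth)
    have "phi x y (concat (map g (rev ss')))"
      apply (rule phi_blocks[of "n - Suc r" "n - Suc a" "n - Suc l" _ e3 e2 e1])
      using lar len e r1 unfolding n_def by simp_all
    then show ?thesis using cl s by simp
  qed
qed



lemma absorb: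
  assumes "C \<in> max_cliques V E" "v \<in> V" "\<forall>w\<in>C. w \<noteq> v \<longrightarrow> {v, w} \<in> E"
  shows "v \<in> C"
proof -
  have cl: "is_clique V E C" and mx: "\<forall>D. is_clique V E D \<and> C \<subseteq> D \<longrightarrow> D = C"
    using assms(1) unfolding max_cliques_def by auto
  have "is_clique V E (insert v C)"
    unfolding is_clique_def
  proof (intro conjI ballI impI)
    show "insert v C \<subseteq> V" using cl assms(2) unfolding is_clique_def by auto
  next
    fix u w assume u: "u \<in> insert v C" and w: "w \<in> insert v C" and uw: "u \<noteq> w"
    show "{u, w} \<in> E"
    proof (cases "u = v")
      case True
      with w uw assms(3) show ?thesis by auto
    next
      case False
      note uF = False
      show ?thesis
      proof (cases "w = v")
        case True
        with u uF assms(3) show ?thesis by (auto simp: insert_commute)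
      next
        case False
        with u w uF uw cl show ?thesis unfolding is_clique_def by auto
      qed
    qed
  qed
  with mx have "insert v C = C" by blast
  then show ?thesis by blast
qed

lemma extend:
  assumes "finite V" "is_clique V E K"
  shows "\<exists>C\<in>max_cliques V E. K \<subseteq> C"
proof -
  define Q where "Q = {D. is_clique V E D \<and> K \<subseteq> D}"
  have fQ: "finite Q" unfolding Q_def is_clique_def using assms(1)
    by (rule_tac finite_subset[of _ "Pow V"]) auto
  have "K \<in> Q" unfolding Q_def using assms(2) by simp
  define m where "m = Max (card ` Q)"
  have "m \<in> card ` Q" unfolding m_def using fQ \<open>K \<in> Q\<close> by (intro Max_in) auto
  then obtain D where D: "D \<in> Q" "card D = m" by blast
  have big: "\<And>D'. D' \<in> Q \<Longrightarrow> card D' \<le> m" unfolding m_def using fQ by simp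
  have "D \<in> max_cliques V E"
    unfolding max_cliques_def
  proof (intro CollectI conjI allI impI)
    show "is_clique V E D" using D unfolding Q_def by simp
  next
    fix D' assume "is_clique V E D' \<and> D \<subseteq> D'"
    then have "D' \<in> Q" "D \<subseteq> D'" "D' \<subseteq> V" using D unfolding Q_def is_clique_def by auto
    then have "card D' \<le> card D" using big D by simp
    moreover have "finite D'" using \<open>D' \<subseteq> V\<close> assms(1) by (rule finite_subset)
    ultimately show "D' = D" using \<open>D \<subseteq> D'\<close> by (metis card_seteq)
  qed
  moreover have "K \<subseteq> D" using D unfolding Q_def by simp
  ultimately show ?thesis by blast
qed

definition cp :: "'a \<Rightarrow> 'a \<Rightarrow> 'a set \<Rightarrow> 'a set" where
  "cp x y C = (if x \<in> C \<and> y \<in> C then C - {x} else C)"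

definition key :: "('a \<Rightarrow> real) \<Rightarrow> 'a \<Rightarrow> 'a \<Rightarrow> 'a set \<Rightarrow> real" where
  "key lo x y C = Max (lo ` cp x y C)"

locale rep_ctx =
  fixes V :: "'a set" and E :: "'a set set" and lo hi :: "'a \<Rightarrow> real" and x y :: 'a
  assumes finV: "finite V"
    and lohi: "\<forall>v\<in>V. lo v \<le> hi v"
    and rep: "\<forall>u\<in>V. \<forall>v\<in>V. u \<noteq> v \<longrightarrow> ({u, v} \<in> E - {{x, y}} \<longleftrightarrow> lo u \<le> hi v \<and> lo v \<le> hi u)"
    and xy: "x \<noteq> y" "x \<in> V" "y \<in> V"
begin

lemma mc_sub: "C \<in> max_cliques V E \<Longrightarrow> C \<subseteq> V"
  unfolding max_cliques_def is_clique_def by auto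

lemma mc_ne: "C \<in> max_cliques V E \<Longrightarrow> C \<noteq> {}"
proof
  assume C: "C \<in> max_cliques V E" "C = {}"
  have "is_clique V E {x}" unfolding is_clique_def using xy by auto
  with C show False unfolding max_cliques_def by blast
qed

lemma mc_edge: "C \<in> max_cliques V E \<Longrightarrow> u \<in> C \<Longrightarrow> w \<in> C \<Longrightarrow> u \<noteq> w \<Longrightarrow> {u, w} \<in> E"
  unfolding max_cliques_def is_clique_def by auto

lemma no_overlap: "\<not> (lo x \<le> hi y \<and> lo y \<le> hi x)"
  using rep xy by auto

lemma overlap_edge:
  assumes "u \<in> V" "w \<in> V" "u \<noteq> w" "lo u \<le> hi w" "lo w \<le> hi u"
  shows "{u, w} \<in> E"
proof -
  have "({u, w} \<in> E - {{x, y}}) = (lo u \<le> hi w \<and> lo w \<le> hi u)" using rep assms(1-3) by blast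
  then show ?thesis using assms(4,5) by simp
qed

lemma cp_sub: "cp x y C \<subseteq> C" unfolding cp_def by auto

lemma cp_not_both: "\<not> (x \<in> cp x y C \<and> y \<in> cp x y C)" unfolding cp_def by auto

lemma cp_ne: "C \<noteq> {} \<Longrightarrow> cp x y C \<noteq> {}" unfolding cp_def using xy by auto

lemma key_in:
  assumes C: "C \<in> max_cliques V E" and w: "w \<in> cp x y C"
  shows "lo w \<le> key lo x y C \<and> key lo x y C \<le> hi w"
proof -
  have fin: "finite (cp x y C)" using mc_sub[OF C] finV cp_sub by (meson finite_subset)
  have ne: "cp x y C \<noteq> {}" using cp_ne mc_ne[OF C] by blast
  have "lo w \<le> key lo x y C" unfolding key_def using fin w by simp
  moreover have "Max (lo ` cp x y C) \<in> lo ` cp x y C" using fin ne by (intro Max_in) auto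
  then obtain u where u: "u \<in> cp x y C" "key lo x y C = lo u"
    unfolding key_def by auto
  have "lo u \<le> hi w"
  proof (cases "u = w")
    case True
    then show ?thesis using lohi mc_sub[OF C] w cp_sub by auto
  next
    case False
    have uw: "u \<in> C" "w \<in> C" using u w cp_sub by auto
    have "{u, w} \<in> E" using mc_edge[OF C uw False] .
    moreover have "{u, w} \<noteq> {x, y}" using cp_not_both[of C] u w by (auto simp: doubleton_eq_iff)
    ultimately have "{u, w} \<in> E - {{x, y}}" by simp
    with rep uw mc_sub[OF C] False show ?thesis by auto
  qed
  ultimately show ?thesis using u by simp
qed

lemma key_absorb:
  assumes C: "C \<in> max_cliques V E" and nb: "\<not> (x \<in> C \<and> y \<in> C)" and v: "v \<in> V"
    and k: "lo v \<le> key lo x y C" "key lo x y C \<le> hi v"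
  shows "v \<in> C"
proof (rule absorb[OF C v], intro ballI impI)
  fix w assume w: "w \<in> C" "w \<noteq> v"
  have "cp x y C = C" using nb unfolding cp_def by auto
  then have "lo w \<le> key lo x y C \<and> key lo x y C \<le> hi w" using key_in[OF C] w by simp
  then have "lo v \<le> hi w \<and> lo w \<le> hi v" using k by linarith
  moreover have "w \<in> V" using w mc_sub[OF C] by blast
  ultimately have "{v, w} \<in> E - {{x, y}}" using rep v w(2) by metis
  then show "{v, w} \<in> E" by simp
qed

end



locale rep_ctx2 = rep_ctx +
  fixes q :: 'a
  assumes qV: "q \<in> V" and qx: "q \<noteq> x" and qy: "q \<noteq> y"
    and Yc: "\<forall>C\<in>max_cliques V E. y \<in> C \<longrightarrow> x \<in> C \<and> q \<in> C"
    and Qc: "\<forall>C\<in>max_cliques V E. q \<in> C \<longrightarrow> x \<in> C"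
    and Db: "\<exists>C\<in>max_cliques V E. q \<in> C \<and> x \<in> C \<and> y \<notin> C"
begin

abbreviation K where "K \<equiv> key lo x y"

lemma in_key: "C \<in> max_cliques V E \<Longrightarrow> v \<in> C \<Longrightarrow> v \<noteq> x \<or> \<not> (x \<in> C \<and> y \<in> C) \<Longrightarrow>
  lo v \<le> K C \<and> K C \<le> hi v"
  by (rule key_in) (auto simp: cp_def)

lemma consec:
  assumes C: "C1 \<in> max_cliques V E" "C2 \<in> max_cliques V E" "C3 \<in> max_cliques V E"
    and k: "K C1 \<le> K C2" "K C2 \<le> K C3" and v: "v \<in> C1" "v \<in> C3"
  shows "v \<in> C2"
proof -
  have vV: "v \<in> V" using v mc_sub[OF C(1)] by blast
  show ?thesis
  proof (cases "v = x")
    case False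
    note vx = False
    have I1: "lo v \<le> K C1 \<and> K C1 \<le> hi v" using in_key[OF C(1) v(1)] vx by blast
    have I3: "lo v \<le> K C3 \<and> K C3 \<le> hi v" using in_key[OF C(3) v(2)] vx by blast
    have I: "lo v \<le> K C2" "K C2 \<le> hi v" using I1 I3 k by linarith+
    show ?thesis
    proof (cases "x \<in> C2 \<and> y \<in> C2")
      case False
      then show ?thesis using key_absorb[OF C(2) _ vV I] by blast
    next
      case True
      show ?thesis
      proof (cases "v = y")
        case True
        with \<open>x \<in> C2 \<and> y \<in> C2\<close> show ?thesis by simp
      next
        case False
        note vy = False
        have Iy: "lo y \<le> K C2 \<and> K C2 \<le> hi y" using in_key[OF C(2), of y] True xy(1) by blast
        have "lo v \<le> hi y" "lo y \<le> hi v" using Iy I by linarith+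
        then have vyE: "{v, y} \<in> E" using overlap_edge[OF vV xy(3) vy] by blast
        have "is_clique V E {v, y}" unfolding is_clique_def using vV xy vyE by (auto simp: insert_commute)
        from extend[OF finV this] obtain M where M: "M \<in> max_cliques V E" "{v, y} \<subseteq> M" by blast
        then have "x \<in> M" using Yc by blast
        then have vxE: "{v, x} \<in> E" using mc_edge[OF M(1)] M(2) vx by blast
        show ?thesis
        proof (rule absorb[OF C(2) vV], intro ballI impI)
          fix w assume w: "w \<in> C2" "w \<noteq> v"
          show "{v, w} \<in> E"
          proof (cases "w = x")
            case True
            then show ?thesis using vxE by simp
          next
            case False
            then have Iw: "lo w \<le> K C2 \<and> K C2 \<le> hi w" using in_key[OF C(2) w(1)] by blast
            have wV: "w \<in> V" using w mc_sub[OF C(2)] by blast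
            have "lo v \<le> hi w" "lo w \<le> hi v" using Iw I by linarith+
            then show ?thesis using overlap_edge[OF vV wV] w(2) by blast
          qed
        qed
      qed
    qed
  next
    case True
    note vx = True
    show ?thesis
    proof (rule ccontr)
      assume nx: "v \<notin> C2"
      then have nx2: "x \<notin> C2" using vx by simp
      have nb2: "\<not> (x \<in> C2 \<and> y \<in> C2)" using nx2 by simp
      obtain D where D: "D \<in> max_cliques V E" "q \<in> D" "x \<in> D" "y \<notin> D" using Db by blast
      have IDx: "lo x \<le> K D \<and> K D \<le> hi x" using in_key[OF D(1) D(3)] D(4) by blast
      have IDq: "lo q \<le> K D \<and> K D \<le> hi q" using in_key[OF D(1) D(2)] D(4) by blast
      have notIx: "\<not> (lo x \<le> K C2 \<and> K C2 \<le> hi x)"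
        using key_absorb[OF C(2) nb2 xy(2)] nx2 by blast
      have Ymem: "\<And>C. C \<in> max_cliques V E \<Longrightarrow> y \<in> C \<Longrightarrow> lo y \<le> K C \<and> K C \<le> hi y \<and> lo q \<le> K C \<and> K C \<le> hi q"
      proof -
        fix C assume "C \<in> max_cliques V E" "y \<in> C"
        moreover then have "q \<in> C" using Yc by blast
        ultimately show "lo y \<le> K C \<and> K C \<le> hi y \<and> lo q \<le> K C \<and> K C \<le> hi q"
          using in_key[of C y] in_key[of C q] xy(1) qx by blast
      qed
      have Xmem: "\<And>C. C \<in> max_cliques V E \<Longrightarrow> x \<in> C \<Longrightarrow> y \<notin> C \<Longrightarrow> lo x \<le> K C \<and> K C \<le> hi x"
        using in_key by blast
      have qabs: "lo q \<le> K C2 \<Longrightarrow> K C2 \<le> hi q \<Longrightarrow> False"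
      proof -
        assume "lo q \<le> K C2" "K C2 \<le> hi q"
        then have "q \<in> C2" using key_absorb[OF C(2) nb2 qV] by blast
        then show False using Qc C(2) nx2 by blast
      qed
      show False
      proof (cases "y \<in> C1")
        case True
        note y1 = True
        show False
        proof (cases "y \<in> C3")
          case True
          have "lo y \<le> K C2" "K C2 \<le> hi y" using Ymem[OF C(1) y1] Ymem[OF C(3) True] k by auto
          then have "y \<in> C2" using key_absorb[OF C(2) nb2 xy(3)] by blast
          then show False using Yc C(2) nx2 by blast
        next
          case False
          have "lo x \<le> K C3 \<and> K C3 \<le> hi x" using Xmem[OF C(3)] v vx False by blast
          then have "K C2 < lo x" using notIx k by linarith
          then show False using qabs Ymem[OF C(1) y1] IDx IDq k by linarith
        qed
      next
        case False
        note y1 = False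
        have I1: "lo x \<le> K C1 \<and> K C1 \<le> hi x" using Xmem[OF C(1)] v vx False by blast
        show False
        proof (cases "y \<in> C3")
          case True
          have "K C2 > hi x" using notIx k I1 by linarith
          then show False using qabs Ymem[OF C(3) True] IDx IDq k by linarith
        next
          case False
          have "lo x \<le> K C3 \<and> K C3 \<le> hi x" using Xmem[OF C(3)] v vx False by blast
          then show False using notIx I1 k by linarith
        qed
      qed
    qed
  qed
qed

lemma phi_contra:
  assumes ph: "phi x y L" and so: "sorted (map K L)" and sub: "set L \<subseteq> max_cliques V E"
  shows False
proof -
  from ph obtain i j m where ijm: "i < j" "j < m" "m < length L" "x \<in> L ! i" "y \<notin> L ! i"
    "x \<in> L ! j" "y \<in> L ! j" "x \<in> L ! m" "y \<notin> L ! m" unfolding phi_def by blast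
  have mem: "L ! i \<in> max_cliques V E" "L ! j \<in> max_cliques V E" "L ! m \<in> max_cliques V E"
    using sub ijm by auto
  have "K (L ! i) \<le> K (L ! j)" "K (L ! j) \<le> K (L ! m)"
    using sorted_nth_mono[OF so, of i j] sorted_nth_mono[OF so, of j m] ijm by auto
  moreover have "lo x \<le> K (L ! i) \<and> K (L ! i) \<le> hi x" using in_key[OF mem(1) ijm(4)] ijm(5) by blast
  moreover have "lo x \<le> K (L ! m) \<and> K (L ! m) \<le> hi x" using in_key[OF mem(3) ijm(8)] ijm(9) by blast
  moreover have "lo y \<le> K (L ! j) \<and> K (L ! j) \<le> hi y" using in_key[OF mem(2) ijm(7)] xy(1) by blast
  ultimately show False using no_overlap by linarith
qed

lemma order_exists:
  "\<exists>L. consecutive_clique_order V E L \<and> sorted (map K L)"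
proof -
  have "max_cliques V E \<subseteq> Pow V" using mc_sub by blast
  then have "finite (max_cliques V E)"
    using finV finite_subset by blast
  then obtain xs where xs: "set xs = max_cliques V E" "distinct xs" using finite_distinct_list by blast
  define L where "L = sort_key K xs"
  have "consecutive_clique_order V E L"
    unfolding consecutive_clique_order_def
  proof (intro conjI allI impI)
    show "distinct L" unfolding L_def using xs by simp
    show "set L = max_cliques V E" unfolding L_def using xs by simp
  next
    fix v i j k assume a: "i \<le> j \<and> j \<le> k \<and> k < length L \<and> v \<in> L ! i \<and> v \<in> L ! k"
    have so: "sorted (map K L)" unfolding L_def by simp
    have sL: "set L = max_cliques V E" unfolding L_def using xs by simp
    have "i < length L" "j < length L" "k < length L" using a by auto
    then have mem: "L ! i \<in> max_cliques V E" "L ! j \<in> max_cliques V E" "L ! k \<in> max_cliques V E"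
      using sL nth_mem by blast+
    show "v \<in> L ! j"
      apply (rule consec[OF mem])
      using sorted_nth_mono[OF so, of i j] sorted_nth_mono[OF so, of j k] a by auto
  qed
  moreover have "sorted (map K L)" unfolding L_def by simp
  ultimately show ?thesis by blast
qed

end



lemma anc_disj: "anc T p A \<Longrightarrow> uniq T \<Longrightarrow> subtree_at T p = Some t \<Longrightarrow> A \<inter> tree_verts t = {}"
proof (rule ccontr)
  assume an: "anc T p A" and u: "uniq T" and st: "subtree_at T p = Some t" and ne: "A \<inter> tree_verts t \<noteq> {}"
  then obtain v where v: "v \<in> A" "v \<in> tree_verts t" by blast
  from an v(1) obtain p0 i p1 where pp: "p = p0 @ i # p1" "assigned T v p0" unfolding anc_def by blast
  from tree_verts_assigned[OF v(2)] obtain p' where "assigned t v p'" by blast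
  then have "assigned T v (p @ p')" using assigned_append[OF st] by blast
  with pp(2) u have "p0 = p @ p'" unfolding uniq_def by blast
  then have "length p0 = length p + length p'" by simp
  moreover have "length p = length p0 + Suc (length p1)" using pp(1) by simp
  ultimately show False by simp
qed

lemma proj: "subtree_at T p = Some t \<Longrightarrow> uniq T \<Longrightarrow> C \<in> set (cliques T) \<Longrightarrow> C \<inter> tree_verts t \<noteq> {} \<Longrightarrow>
   C \<inter> tree_verts t \<in> set (cliques t)"
proof -
  assume st: "subtree_at T p = Some t" and u: "uniq T" and C: "C \<in> set (cliques T)" "C \<inter> tree_verts t \<noteq> {}"
  from down[OF st C u] obtain A C' where A: "C = A \<union> C'" "C' \<in> set (cliques t)" "anc T p A" by blast
  have "A \<inter> tree_verts t = {}" using anc_disj[OF A(3) u st] .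
  moreover have "C' \<subseteq> tree_verts t" using cliques_sub[OF A(2)] .
  ultimately have "C \<inter> tree_verts t = C'" using A(1) by blast
  with A(2) show ?thesis by simp
qed

lemma up': "subtree_at T p = Some t \<Longrightarrow> uniq T \<Longrightarrow> C' \<in> set (cliques t) \<Longrightarrow>
   \<exists>C\<in>set (cliques T). C \<inter> tree_verts t = C'"
proof -
  assume st: "subtree_at T p = Some t" and u: "uniq T" and C': "C' \<in> set (cliques t)"
  from up[OF st C'] obtain A where A: "A \<union> C' \<in> set (cliques T)" "anc T p A" by blast
  have "A \<inter> tree_verts t = {}" using anc_disj[OF A(2) u st] .
  moreover have "C' \<subseteq> tree_verts t" using cliques_sub[OF C'] .
  ultimately have "(A \<union> C') \<inter> tree_verts t = C'" by blast
  with A(1) show ?thesis by blast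
qed

lemma mem_cliques_QN: "C' \<in> set (cliques (QN ss)) \<longleftrightarrow>
   (\<exists>j<length ss. \<exists>D\<in>set (cliques (snd (ss ! j))). C' = fst (ss ! j) \<union> D)"
proof
  assume "C' \<in> set (cliques (QN ss))"
  then obtain S c D where "(S, c) \<in> set ss" "D \<in> set (cliques c)" "C' = S \<union> D"
    unfolding set_cliques_QN by blast
  then show "\<exists>j<length ss. \<exists>D\<in>set (cliques (snd (ss ! j))). C' = fst (ss ! j) \<union> D"
    by (metis fst_conv in_set_conv_nth snd_conv)
next
  assume "\<exists>j<length ss. \<exists>D\<in>set (cliques (snd (ss ! j))). C' = fst (ss ! j) \<union> D"
  then obtain j D where j: "j < length ss" "D \<in> set (cliques (snd (ss ! j)))" "C' = fst (ss ! j) \<union> D"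
    by blast
  obtain S c where sc: "ss ! j = (S, c)" by (cases "ss ! j")
  have "(S, c) \<in> set ss" using j(1) sc by (metis nth_mem)
  moreover have "C' \<in> (\<union>) S ` set (cliques c)" using j sc by simp
  ultimately show "C' \<in> set (cliques (QN ss))" unfolding set_cliques_QN by blast
qed

lemma clique_of_vert: "v \<in> tree_verts t \<Longrightarrow> wf_tree t \<Longrightarrow> \<exists>C\<in>set (cliques t). v \<in> C"
proof (induction t)
  case Empty
  then show ?case by simp
next
  case (PN S cs)
  show ?case
  proof (cases "v \<in> S")
    case True
    obtain C where C: "C \<in> set (cliques (PN S cs))" using cliques_ne[OF PN.prems(2)]
      by (cases "cliques (PN S cs)") auto
    have "S \<subseteq> C" using C by (auto split: if_splits)
    with True C show ?thesis by blast
  next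
    case False
    with PN.prems(1) obtain c where c: "c \<in> set cs" "v \<in> tree_verts c" by auto
    then obtain i where i: "i < length cs" "cs ! i = c" by (auto simp: in_set_conv_nth)
    have "subtree_at (PN S cs) [i] = Some c" using i by simp
    then have "wf_tree c" using PN.prems(2) wf_tree_sub by blast
    from PN.IH[OF c(1) c(2) this] obtain C where C: "C \<in> set (cliques c)" "v \<in> C" by blast
    have cs: "cs \<noteq> []" using c by auto
    have "S \<union> C \<in> set (cliques (PN S cs))" unfolding set_cliques_PN[OF cs] using c(1) C(1) by blast
    with C(2) show ?thesis by blast
  qed
next
  case (QN ss)
  from QN.prems(1) obtain S c where Sc: "(S, c) \<in> set ss" "v \<in> S \<or> v \<in> tree_verts c" by auto
  then obtain i where i: "i < length ss" "ss ! i = (S, c)" by (auto simp: in_set_conv_nth)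
  have "subtree_at (QN ss) [i] = Some c" using i by simp
  then have wc: "wf_tree c" using QN.prems(2) wf_tree_sub by blast
  show ?case
  proof (cases "v \<in> S")
    case True
    obtain D where D: "D \<in> set (cliques c)" using cliques_ne[OF wc] by (cases "cliques c") auto
    have "S \<union> D \<in> set (cliques (QN ss))" unfolding set_cliques_QN using Sc(1) D by blast
    with True show ?thesis by blast
  next
    case False
    with Sc have "v \<in> tree_verts c" by simp
    from QN.IH[OF Sc(1) _ this wc] obtain D where D: "D \<in> set (cliques c)" "v \<in> D" by auto
    have "S \<union> D \<in> set (cliques (QN ss))" unfolding set_cliques_QN using Sc(1) D by blast
    with D show ?thesis by blast
  qed
qed



theorem mainTheorem14:
  fixes V :: "'a set" and E :: "'a set set" and T :: "'a mpq"
    and x y q :: 'a and ss :: "('a set \<times> 'a mpq) list" and a :: nat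
  assumes "interval_graph V E"
    and "is_mpq_tree V E T"
    and "{x, y} \<in> E"
    and "over T x y"
    and "node_of T x \<noteq> node_of T y"
    and "starts_in_central T x y ss a"
    and "q \<in> fst (ss ! a) - (fst (ss ! lsec ss x) \<union> fst (ss ! rsec ss x))"
  shows "\<not> interval_edge V E x y"
proof
  assume ie: "interval_edge V E x y"
  have gr: "graph V E" using assms(1) unfolding interval_graph_def by simp
  then have finV: "finite V" unfolding graph_def by simp
  from gr assms(3) obtain u v where uv: "{x, y} = {u, v}" "u \<in> V" "v \<in> V" "u \<noteq> v"
    unfolding graph_def by blast
  then have xyV: "x \<in> V" "y \<in> V" "x \<noteq> y" by (auto simp: doubleton_eq_iff)
  from ie obtain lo hi :: "'a \<Rightarrow> real" where lohi: "\<forall>v\<in>V. lo v \<le> hi v"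
    and rep: "\<forall>u\<in>V. \<forall>v\<in>V. u \<noteq> v \<longrightarrow> ({u, v} \<in> E - {{x, y}} \<longleftrightarrow> lo u \<le> hi v \<and> lo v \<le> hi u)"
    unfolding interval_edge_def interval_graph_def by blast
  have tvV: "tree_verts T \<subseteq> V" using assms(2) unfolding is_mpq_tree_def by (elim conjE) assumption
  have ex1: "\<forall>v\<in>V. \<exists>!p. assigned T v p" using assms(2) unfolding is_mpq_tree_def by (elim conjE) assumption
  have clq: "set (cliques T) = max_cliques V E" using assms(2) unfolding is_mpq_tree_def by (elim conjE) assumption
  have ord: "{cliques T' | T'. equiv_tree T T'} = {L. consecutive_clique_order V E L}"
    using assms(2) unfolding is_mpq_tree_def by (elim conjE) assumption
  have nok: "\<forall>p t. subtree_at T p = Some t \<longrightarrow> node_ok t"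
    using assms(2) unfolding is_mpq_tree_def by (elim conjE) assumption
  have wf: "wf_tree T" unfolding wf_tree_def by (rule nok)
  have asV: "\<And>v p. assigned T v p \<Longrightarrow> v \<in> V"
  proof -
    fix v p assume "assigned T v p"
    then obtain t where t: "subtree_at T p = Some t" "v \<in> node_verts t" unfolding assigned_def by blast
    have "v \<in> tree_verts t" using t(2) node_verts_sub[of t] by blast
    then show "v \<in> V" using subtree_verts[OF t(1)] tvV by blast
  qed
  have U: "uniq T" unfolding uniq_def
  proof (intro allI impI)
    fix v p1 p2 assume a1: "assigned T v p1" and a2: "assigned T v p2"
    then have "\<exists>!p. assigned T v p" using asV ex1 by blast
    then show "p1 = p2" using a1 a2 by blast
  qed
  have nodeof: "\<And>v. v \<in> V \<Longrightarrow> assigned T v (node_of T v)"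
  proof -
    fix v assume "v \<in> V"
    then have "\<exists>!p. assigned T v p" using ex1 by blast
    then show "assigned T v (node_of T v)" unfolding node_of_def by (rule theI')
  qed
  define p where "p = node_of T x"
  have ax: "assigned T x p" unfolding p_def using nodeof xyV by blast
  from assms(6) obtain rest where st: "subtree_at T p = Some (QN ss)"
    and ny: "node_of T y = p @ a # rest" and la: "lsec ss x < a" and ar: "a < rsec ss x"
    unfolding starts_in_central_def p_def by blast
  have ay: "assigned T y (p @ a # rest)" using nodeof[OF xyV(2)] ny by simp
  have nokQ: "node_ok (QN ss)" using nok st by blast
  define n where "n = length ss"
  have n3: "3 \<le> n" unfolding n_def using nodeok_QN_len[OF nokQ] .
  have xN: "x \<in> node_verts (QN ss)" using ax st unfolding assigned_def by auto
  obtain l r where lr: "l < r" "r < n" "sec_idx ss x = {l..r}"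
    using nodeok_QN_span[OF nokQ xN] unfolding n_def by blast
  have ls: "lsec ss x = l" unfolding lsec_def lr(3) using lr(1) by (intro Min_eqI) auto
  have rs: "rsec ss x = r" unfolding rsec_def lr(3) using lr(1) by (intro Max_eqI) auto
  have lar: "l < a" "a < r" using la ar ls rs by simp_all
  have xS: "\<And>j. j < n \<Longrightarrow> x \<in> fst (ss ! j) \<longleftrightarrow> l \<le> j \<and> j \<le> r"
  proof -
    fix j assume "j < n"
    have "j \<in> sec_idx ss x \<longleftrightarrow> l \<le> j \<and> j \<le> r" using lr(3) by simp
    then show "x \<in> fst (ss ! j) \<longleftrightarrow> l \<le> j \<and> j \<le> r" using \<open>j < n\<close> unfolding sec_idx_def n_def by simp
  qed
  have an: "a < n" using lar lr by simp
  have q: "q \<in> fst (ss ! a)" "q \<notin> fst (ss ! l)" "q \<notin> fst (ss ! r)" using assms(7) ls rs by auto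
  have qN: "q \<in> node_verts (QN ss)" using q(1) an unfolding n_def by auto
  obtain lq rq where lqr: "lq < rq" "rq < n" "sec_idx ss q = {lq..rq}"
    using nodeok_QN_span[OF nokQ qN] unfolding n_def by blast
  have qS: "\<And>j. j < n \<Longrightarrow> q \<in> fst (ss ! j) \<longleftrightarrow> lq \<le> j \<and> j \<le> rq"
  proof -
    fix j assume "j < n"
    have "j \<in> sec_idx ss q \<longleftrightarrow> lq \<le> j \<and> j \<le> rq" using lqr(3) by simp
    then show "q \<in> fst (ss ! j) \<longleftrightarrow> lq \<le> j \<and> j \<le> rq" using \<open>j < n\<close> unfolding sec_idx_def n_def by simp
  qed
  have qa: "lq \<le> a" "a \<le> rq" using qS[OF an] q(1) by auto
  have lqgt: "l < lq"
  proof (rule ccontr)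
    assume "\<not> l < lq"
    then have "lq \<le> l" "l \<le> rq" using lar qa by auto
    then have "q \<in> fst (ss ! l)" using qS[of l] lr by simp
    with q(2) show False by simp
  qed
  have rqlt: "rq < r"
  proof (rule ccontr)
    assume "\<not> rq < r"
    then have "lq \<le> r" "r \<le> rq" using lar qa by auto
    then have "q \<in> fst (ss ! r)" using qS[of r] lr by simp
    with q(3) show False by simp
  qed
  have qxS: "\<And>j. j < n \<Longrightarrow> q \<in> fst (ss ! j) \<Longrightarrow> x \<in> fst (ss ! j)"
  proof -
    fix j assume j: "j < n" "q \<in> fst (ss ! j)"
    then have "lq \<le> j" "j \<le> rq" using qS by blast+
    then have "l \<le> j" "j \<le> r" using lqgt rqlt by linarith+
    then show "x \<in> fst (ss ! j)" using xS j(1) by blast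
  qed
  define b where "b = (if lq = a then rq else lq)"
  have b: "b \<noteq> a" "b < n" "q \<in> fst (ss ! b)" using lqr qa qS unfolding b_def by auto
  have xb: "x \<in> fst (ss ! b)" using qxS b by blast
  have yN: "y \<notin> node_verts (QN ss)"
  proof
    assume "y \<in> node_verts (QN ss)"
    then have "assigned T y p" using st unfolding assigned_def by auto
    with ay U have "p = p @ a # rest" unfolding uniq_def by blast
    then show False by simp
  qed
  have yS: "\<And>j. j < n \<Longrightarrow> y \<notin> fst (ss ! j)" using yN unfolding n_def by auto
  obtain sy where sy: "subtree_at T (p @ a # rest) = Some sy" "y \<in> node_verts sy"
    using ay unfolding assigned_def by blast
  have "subtree_at (QN ss) (a # rest) = Some sy" using sy(1) subtree_at_append[OF st] by simp
  then have sya: "subtree_at (snd (ss ! a)) rest = Some sy" using an unfolding n_def by (simp split: if_splits)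
  have yTa: "y \<in> tree_verts (snd (ss ! a))" using sy(2) node_verts_sub[of sy] subtree_verts[OF sya] by blast
  have stj: "\<And>j. j < n \<Longrightarrow> subtree_at T (p @ [j]) = Some (snd (ss ! j))"
    using subtree_at_append[OF st] unfolding n_def by simp
  have yTj: "\<And>j. j < n \<Longrightarrow> j \<noteq> a \<Longrightarrow> y \<notin> tree_verts (snd (ss ! j))"
  proof
    fix j assume j: "j < n" "j \<noteq> a" and yj: "y \<in> tree_verts (snd (ss ! j))"
    from tree_verts_assigned[OF yj] obtain p' where "assigned (snd (ss ! j)) y p'" by blast
    then have "assigned T y ((p @ [j]) @ p')" using assigned_append[OF stj[OF j(1)]] by blast
    with ay U have "p @ a # rest = (p @ [j]) @ p'" unfolding uniq_def by blast
    then show False using j(2) by simp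
  qed
  have secT: "\<And>v j. v \<in> node_verts (QN ss) \<Longrightarrow> j < n \<Longrightarrow> v \<notin> tree_verts (snd (ss ! j))"
  proof
    fix v j assume v: "v \<in> node_verts (QN ss)" and j: "j < n" and vj: "v \<in> tree_verts (snd (ss ! j))"
    have av: "assigned T v p" using v st unfolding assigned_def by auto
    from tree_verts_assigned[OF vj] obtain p' where "assigned (snd (ss ! j)) v p'" by blast
    then have "assigned T v ((p @ [j]) @ p')" using assigned_append[OF stj[OF j]] by blast
    with av U have "p = (p @ [j]) @ p'" unfolding uniq_def by blast
    then show False by simp
  qed
  define TV where "TV = tree_verts (QN ss)"
  have NTV: "node_verts (QN ss) \<subseteq> TV" unfolding TV_def by (rule node_verts_sub)
  have CTV: "\<And>j. j < n \<Longrightarrow> tree_verts (snd (ss ! j)) \<subseteq> TV"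
  proof -
    fix j assume "j < n"
    then have "subtree_at (QN ss) [j] = Some (snd (ss ! j))" unfolding n_def by simp
    then show "tree_verts (snd (ss ! j)) \<subseteq> TV" unfolding TV_def by (rule subtree_verts)
  qed
  have prj: "\<And>C. C \<in> max_cliques V E \<Longrightarrow> C \<inter> TV \<noteq> {} \<Longrightarrow>
      \<exists>j<n. \<exists>D\<in>set (cliques (snd (ss ! j))). C \<inter> TV = fst (ss ! j) \<union> D"
  proof -
    fix C assume C: "C \<in> max_cliques V E" "C \<inter> TV \<noteq> {}"
    have "C \<inter> TV \<in> set (cliques (QN ss))" using proj[OF st U] C clq unfolding TV_def by blast
    then show "\<exists>j<n. \<exists>D\<in>set (cliques (snd (ss ! j))). C \<inter> TV = fst (ss ! j) \<union> D"
      unfolding mem_cliques_QN n_def .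
  qed
  have qV: "q \<in> V" using qN NTV subtree_verts[OF st] tvV unfolding TV_def by blast
  have qx: "q \<noteq> x" using q(2) xS lr by auto
  have qy: "q \<noteq> y" using qN yN by blast
  have Yc: "\<forall>C\<in>max_cliques V E. y \<in> C \<longrightarrow> x \<in> C \<and> q \<in> C"
  proof (intro ballI impI)
    fix C assume C: "C \<in> max_cliques V E" "y \<in> C"
    have yTV: "y \<in> TV" using yTa CTV an by blast
    then obtain j D where jD: "j < n" "D \<in> set (cliques (snd (ss ! j)))" "C \<inter> TV = fst (ss ! j) \<union> D"
      using prj[OF C(1)] C(2) by blast
    have "y \<in> D" using jD(3) C(2) yTV yS[OF jD(1)] by blast
    then have "y \<in> tree_verts (snd (ss ! j))" using cliques_sub[OF jD(2)] by blast
    then have "j = a" using yTj jD(1) by blast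
    then show "x \<in> C \<and> q \<in> C" using jD(3) xS[OF an] lar q(1) by auto
  qed
  have Qc: "\<forall>C\<in>max_cliques V E. q \<in> C \<longrightarrow> x \<in> C"
  proof (intro ballI impI)
    fix C assume C: "C \<in> max_cliques V E" "q \<in> C"
    have qTV: "q \<in> TV" using qN NTV by blast
    then obtain j D where jD: "j < n" "D \<in> set (cliques (snd (ss ! j)))" "C \<inter> TV = fst (ss ! j) \<union> D"
      using prj[OF C(1)] C(2) by blast
    have "q \<notin> D" using secT[OF qN jD(1)] cliques_sub[OF jD(2)] by blast
    then have "q \<in> fst (ss ! j)" using jD(3) C(2) qTV by blast
    then have "x \<in> fst (ss ! j)" using qxS jD(1) by blast
    then show "x \<in> C" using jD(3) by blast
  qed
  have Db: "\<exists>C\<in>max_cliques V E. q \<in> C \<and> x \<in> C \<and> y \<notin> C"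
  proof -
    have wfb: "wf_tree (snd (ss ! b))" using wf_tree_sub[OF wf stj[OF b(2)]] .
    obtain D where D: "D \<in> set (cliques (snd (ss ! b)))" using cliques_ne[OF wfb]
      by (cases "cliques (snd (ss ! b))") auto
    have "fst (ss ! b) \<union> D \<in> set (cliques (QN ss))" unfolding mem_cliques_QN using b(2) D unfolding n_def by blast
    from up'[OF st U this] obtain C where C: "C \<in> set (cliques T)" "C \<inter> TV = fst (ss ! b) \<union> D"
      unfolding TV_def by blast
    have "y \<notin> D" using yTj[OF b(2) b(1)] cliques_sub[OF D] by blast
    then have "y \<notin> C \<inter> TV" using C(2) yS[OF b(2)] by blast
    moreover have "y \<in> TV" using yTa CTV an by blast
    ultimately have "y \<notin> C" by blast
    moreover have "q \<in> C" "x \<in> C" using C(2) b(3) xb by blast+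
    ultimately show ?thesis using C(1) clq by blast
  qed
  interpret R: rep_ctx2 V E lo hi x y q
    by unfold_locales (use finV lohi rep xyV qV qx qy Yc Qc Db in auto)
  obtain L where L: "consecutive_clique_order V E L" "sorted (map (key lo x y) L)"
    using R.order_exists by blast
  then obtain T' where T': "equiv_tree T T'" "L = cliques T'" using ord by blast
  have phiQ: "\<forall>t'. equiv_tree (QN ss) t' \<longrightarrow> phi x y (cliques t')"
  proof (intro allI impI)
    fix t' assume "equiv_tree (QN ss) t'"
    show "phi x y (cliques t')"
    proof (rule base[of l a r ss x y])
      show "l < a" "a < r" "r < length ss" using lar lr unfolding n_def by simp_all
      show "x \<in> fst (ss ! l)" "x \<in> fst (ss ! a)" "x \<in> fst (ss ! r)" using xS lr lar by auto
      show "\<forall>j<length ss. y \<notin> fst (ss ! j)" using yS unfolding n_def by blast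
      show "y \<notin> tree_verts (snd (ss ! l))" "y \<notin> tree_verts (snd (ss ! r))" using yTj lr lar by auto
      show "\<exists>C\<in>set (cliques (snd (ss ! a))). y \<in> C"
        using clique_of_vert[OF yTa wf_tree_sub[OF wf stj[OF an]]] .
      show "cliques (snd (ss ! l)) \<noteq> []" using cliques_ne[OF wf_tree_sub[OF wf stj[of l]]] lr by simp
      show "cliques (snd (ss ! r)) \<noteq> []" using cliques_ne[OF wf_tree_sub[OF wf stj[of r]]] lr by simp
      show "equiv_tree (QN ss) t'" by fact
    qed
  qed
  have anc_ok: "\<forall>p0 i p1 s. p = p0 @ i # p1 \<longrightarrow> subtree_at T p0 = Some s \<longrightarrow> x \<notin> node_verts s \<and> y \<notin> node_verts s"
  proof (intro allI impI conjI)
    fix p0 i p1 s assume pp: "p = p0 @ i # p1" and s: "subtree_at T p0 = Some s"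
    show "x \<notin> node_verts s"
    proof
      assume "x \<in> node_verts s"
      then have "assigned T x p0" using s unfolding assigned_def by (cases s) auto
      with ax U have "p0 = p" unfolding uniq_def by blast
      with pp show False by simp
    qed
    show "y \<notin> node_verts s"
    proof
      assume "y \<in> node_verts s"
      then have "assigned T y p0" using s unfolding assigned_def by (cases s) auto
      with ay U have "p0 = p @ a # rest" unfolding uniq_def by blast
      with pp show False by simp
    qed
  qed
  have "phi x y (cliques T')" using lift[OF st phiQ anc_ok T'(1)] .
  moreover have "set L \<subseteq> max_cliques V E" using L(1) unfolding consecutive_clique_order_def by simp
  ultimately show False using R.phi_contra L(2) T'(2) by blast
qed


end
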